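(* Let $k$ be an infinite field of characteristic $p>0$. Then for every positive integer $n$, $R_n^{(p)}\subseteq L_n$.
   Context: $X=\{x_1,x_2,\ldots\}$ is a countably infinite set and $k_0\langle X\rangle$ is the free associative $k$-algebra (without identity) on $X$. A $T$-space is a $k$-linear subspace closed under every algebra endomorphism of $k_0\langle X\rangle$; the $T$-space generated by a subset is the smallest $T$-space containing it. $S_p(v_1,\ldots,v_p)=\sum_{\sigma\in\Sigma_p}\prod_{i=1}^p v_{\sigma(i)}$. $R_1^{(p)}$ is the $T$-space generated by $S_p(x_1,\ldots,x_p)$, and $R_{n+1}^{(p)}$ is the $T$-space generated by $R_n^{(p)}$ together with all products $u\,S_p(v_1,\ldots,v_p)$, $u\in R_n^{(p)}$, $v_i\in k_0\langle X\rangle$. $L_1$ is the $T$-space generated by $x_1^p$, and $L_{n+1}$ is the $T$-space generated by $L_n$ together with all products $u\,v^p$, $u\in L_n$, $v\in k_0\langle X\rangle$. *)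

theory Defs
  imports Main "HOL-Combinatorics.Permutations"
begin

text \<open>Free associative k-algebra without identity on X = {x_0, x_1, ...} (indexed by nat):
  elements are finitely supported coefficient functions on words (nat lists) with zero
  coefficient on the empty word.\<close>

type_synonym 'k fa = "nat list \<Rightarrow> 'k"

definition FA :: "'k::field fa set" where
  "FA = {f. finite {w. f w \<noteq> 0} \<and> f [] = 0}"

definition fzero :: "'k::field fa" where "fzero = (\<lambda>w. 0)"
definition fadd :: "'k::field fa \<Rightarrow> 'k fa \<Rightarrow> 'k fa" where "fadd f g = (\<lambda>w. f w + g w)"
definition fsc :: "'k::field \<Rightarrow> 'k fa \<Rightarrow> 'k fa" where "fsc c f = (\<lambda>w. c * f w)"
definition fsum :: "('i \<Rightarrow> 'k::field fa) \<Rightarrow> 'i set \<Rightarrow> 'k fa" where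
  "fsum F I = (\<lambda>w. \<Sum>i\<in>I. F i w)"

definition fmul :: "'k::field fa \<Rightarrow> 'k fa \<Rightarrow> 'k fa" where
  "fmul f g = (\<lambda>w. \<Sum>i\<le>length w. f (take i w) * g (drop i w))"

text \<open>Formal unit (only used as the neutral start of products of nonempty lists).\<close>
definition fone :: "'k::field fa" where "fone = (\<lambda>w. if w = [] then 1 else 0)"

definition fprod :: "'k::field fa list \<Rightarrow> 'k fa" where
  "fprod vs = foldr fmul vs fone"

definition fpow :: "'k::field fa \<Rightarrow> nat \<Rightarrow> 'k fa" where
  "fpow v n = fprod (replicate n v)"

definition var :: "nat \<Rightarrow> 'k::field fa" where
  "var i = (\<lambda>w. if w = [i] then 1 else 0)"

definition alg_endo :: "('k::field fa \<Rightarrow> 'k fa) \<Rightarrow> bool" where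
  "alg_endo h \<longleftrightarrow> (\<forall>f\<in>FA. h f \<in> FA) \<and>
     (\<forall>f\<in>FA. \<forall>g\<in>FA. h (fadd f g) = fadd (h f) (h g) \<and> h (fmul f g) = fmul (h f) (h g)) \<and>
     (\<forall>c. \<forall>f\<in>FA. h (fsc c f) = fsc c (h f))"

definition tspace :: "'k::field fa set \<Rightarrow> bool" where
  "tspace T \<longleftrightarrow> T \<subseteq> FA \<and> fzero \<in> T \<and> (\<forall>a\<in>T. \<forall>b\<in>T. fadd a b \<in> T) \<and>
     (\<forall>c. \<forall>a\<in>T. fsc c a \<in> T) \<and> (\<forall>h. alg_endo h \<longrightarrow> (\<forall>a\<in>T. h a \<in> T))"

definition tgen :: "'k::field fa set \<Rightarrow> 'k fa set" where
  "tgen S = \<Inter>{T. tspace T \<and> S \<subseteq> T}"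

definition Sp :: "nat \<Rightarrow> (nat \<Rightarrow> 'k::field fa) \<Rightarrow> 'k fa" where
  "Sp p v = fsum (\<lambda>\<sigma>. fprod (map (\<lambda>i. v (\<sigma> i)) [0..<p])) {\<sigma>. \<sigma> permutes {0..<p}}"

text \<open>R_n^(p) and L_n, indexed from n = 1 (value at 0 is irrelevant).
  x_1,...,x_p are represented by var 1, ..., var p.\<close>
fun Rsp :: "nat \<Rightarrow> nat \<Rightarrow> 'k::field fa set" where
  "Rsp p 0 = {}"
| "Rsp p (Suc 0) = tgen {Sp p (\<lambda>i. var (Suc i))}"
| "Rsp p (Suc (Suc n)) = tgen (Rsp p (Suc n) \<union>
     {fmul u (Sp p v) | u v. u \<in> Rsp p (Suc n) \<and> (\<forall>i<p. v i \<in> FA)})"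

fun Lsp :: "nat \<Rightarrow> nat \<Rightarrow> 'k::field fa set" where
  "Lsp p 0 = {}"
| "Lsp p (Suc 0) = tgen {fpow (var 1) p}"
| "Lsp p (Suc (Suc n)) = tgen (Lsp p (Suc n) \<union>
     {fmul u (fpow v p) | u v. u \<in> Lsp p (Suc n) \<and> v \<in> FA})"

end

theory Submission imports Defs begin

lemma fsum_app: "fsum F I w = (\<Sum>i\<in>I. F i w)" by (simp add: fsum_def)

lemma fmul_fsum_right: "fmul f (fsum G K) = fsum (\<lambda>b. fmul f (G b)) K"
  unfolding fmul_def fsum_def by (rule ext) (simp add: sum_distrib_left sum.swap[of _ K])

lemma fmul_fsum_left: "fmul (fsum F K) g = fsum (\<lambda>b. fmul (F b) g) K"
  unfolding fmul_def fsum_def by (rule ext) (simp add: sum_distrib_right sum.swap[of _ K])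

lemma fmul_fsc_right: "fmul f (fsc c g) = fsc c (fmul f g)"
  unfolding fmul_def fsc_def by (rule ext) (simp add: sum_distrib_left mult_ac)

lemma fpow_Suc: "fpow v (Suc n) = fmul v (fpow v n)"
  by (simp add: fpow_def fprod_def)

lemma fpow_0: "fpow v 0 = fone"
  by (simp add: fpow_def fprod_def)

lemma fprod_Cons: "fprod (x # xs) = fmul x (fprod xs)"
  by (simp add: fprod_def)

lemma words_Suc: "{ws. set ws \<subseteq> J \<and> length ws = Suc n} = (\<lambda>(j,ws). j # ws) ` (J \<times> {ws. set ws \<subseteq> J \<and> length ws = n})"
proof (rule set_eqI, rule iffI)
  fix x assume "x \<in> {ws. set ws \<subseteq> J \<and> length ws = Suc n}"
  then show "x \<in> (\<lambda>(j,ws). j # ws) ` (J \<times> {ws. set ws \<subseteq> J \<and> length ws = n})"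
    by (cases x) (auto intro!: image_eqI[where x="(hd x, tl x)"])
qed auto

lemma fpow_fsum:
  assumes "finite J"
  shows "fpow (fsum v J) n = fsum (\<lambda>ws. fprod (map v ws)) {ws. set ws \<subseteq> J \<and> length ws = n}"
proof (induction n)
  case 0
  have "{ws. set ws \<subseteq> J \<and> length ws = 0} = {[]}" by auto
  then show ?case by (simp add: fpow_0 fsum_def fprod_def)
next
  case (Suc n)
  let ?W = "{ws. set ws \<subseteq> J \<and> length ws = n}"
  have fW: "finite ?W" using finite_lists_length_eq[OF assms] by simp
  have inj: "inj_on (\<lambda>(j,ws). j # ws) (J \<times> ?W)" by (auto simp: inj_on_def)
  have "fpow (fsum v J) (Suc n) = fsum (\<lambda>ws. fsum (\<lambda>j. fmul (v j) (fprod (map v ws))) J) ?W"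
    by (simp add: fpow_Suc Suc fmul_fsum_left fmul_fsum_right)
  also have "\<dots> = fsum (\<lambda>ws. fprod (map v ws)) {ws. set ws \<subseteq> J \<and> length ws = Suc n}"
  proof (rule ext)
    fix u
    have "fsum (\<lambda>ws. fsum (\<lambda>j. fmul (v j) (fprod (map v ws))) J) ?W u
        = (\<Sum>ws\<in>?W. \<Sum>j\<in>J. fprod (map v (j # ws)) u)" by (simp add: fsum_def fprod_Cons)
    also have "\<dots> = (\<Sum>j\<in>J. \<Sum>ws\<in>?W. fprod (map v (j # ws)) u)" by (rule sum.swap)
    also have "\<dots> = (\<Sum>x\<in>J \<times> ?W. fprod (map v ((\<lambda>(j,ws). j # ws) x)) u)"
      by (simp add: sum.cartesian_product split_def)
    also have "\<dots> = (\<Sum>ws\<in>(\<lambda>(j,ws). j # ws) ` (J \<times> ?W). fprod (map v ws) u)"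
      by (rule sum.reindex[OF inj, symmetric, simplified comp_def])
    also have "\<dots> = fsum (\<lambda>ws. fprod (map v ws)) {ws. set ws \<subseteq> J \<and> length ws = Suc n} u"
      unfolding words_Suc by (simp add: fsum_def)
    finally show "fsum (\<lambda>ws. fsum (\<lambda>j. fmul (v j) (fprod (map v ws))) J) ?W u = fsum (\<lambda>ws. fprod (map v ws)) {ws. set ws \<subseteq> J \<and> length ws = Suc n} u" .
  qed
  finally show ?case .
qed

lemma Sp_words:
  "Sp p v = fsum (\<lambda>ws. fprod (map v ws)) {ws. set ws = {0..<p} \<and> length ws = p}"
proof -
  let ?S = "{\<sigma>. \<sigma> permutes {0..<p}}"
  let ?T = "{ws. set ws = {0..<p} \<and> length ws = p}"
  let ?j = "\<lambda>\<sigma>::nat\<Rightarrow>nat. map \<sigma> [0..<p]"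
  let ?i = "\<lambda>ws. (\<lambda>k. if k < p then ws ! k else k)"
  have "\<forall>u. (\<Sum>\<sigma>\<in>?S. fprod (map (\<lambda>i. v (\<sigma> i)) [0..<p]) u) = (\<Sum>ws\<in>?T. fprod (map v ws) u)"
  proof
    fix u
    show "(\<Sum>\<sigma>\<in>?S. fprod (map (\<lambda>i. v (\<sigma> i)) [0..<p]) u) = (\<Sum>ws\<in>?T. fprod (map v ws) u)"
    proof (rule sum.reindex_bij_witness[where j = ?j and i = ?i])
      fix \<sigma> assume "\<sigma> \<in> ?S"
      hence pm: "\<sigma> permutes {0..<p}" by simp
      show "?i (?j \<sigma>) = \<sigma>"
        using permutes_not_in[OF pm] by (auto simp: fun_eq_iff)
      have "set (?j \<sigma>) = \<sigma> ` {0..<p}" by simp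
      also have "\<dots> = {0..<p}" by (rule permutes_image[OF pm])
      finally show "?j \<sigma> \<in> ?T" by simp
      show "fprod (map v (?j \<sigma>)) u = fprod (map (\<lambda>i. v (\<sigma> i)) [0..<p]) u" by (simp add: comp_def)
    next
      fix ws assume "ws \<in> ?T"
      hence ws: "set ws = {0..<p}" "length ws = p" by auto
      show "?j (?i ws) = ws" using ws by (intro nth_equalityI) auto
      have dist: "distinct ws" using ws by (simp add: card_distinct)
      have "bij_betw (?i ws) {0..<p} {0..<p}"
        unfolding bij_betw_def
      proof
        show "inj_on (?i ws) {0..<p}" using dist ws by (auto simp: inj_on_def nth_eq_iff_index_eq)
        show "?i ws ` {0..<p} = {0..<p}"
        proof -
          have "?i ws ` {0..<p} = (\<lambda>k. ws ! k) ` {0..<length ws}" using ws by (auto simp: image_def)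
          also have "\<dots> = set ws" by (auto simp: set_conv_nth image_def)
          finally show ?thesis using ws by simp
        qed
      qed
      then show "?i ws \<in> ?S" by (auto intro!: bij_imp_permutes)
    qed
  qed
  then show ?thesis unfolding Sp_def fsum_def by (simp add: fun_eq_iff)
qed

lemma Sp_polar:
  "Sp p v = fsum (\<lambda>J. fsc ((-1) ^ (p - card J)) (fpow (fsum v J) p)) (Pow {0..<p})"
proof (rule ext)
  fix u
  define c where "c ws = fprod (map v ws) u" for ws
  define f where "f T = (\<Sum>ws\<in>{ws. set ws = T \<and> length ws = p}. c ws)" for T :: "nat set"
  define g where "g S = (\<Sum>ws\<in>{ws. set ws \<subseteq> S \<and> length ws = p}. c ws)" for S :: "nat set"
  have gf: "g S = sum f (Pow S)" if "finite S" for S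
  proof -
    have "sum f (Pow S) = (\<Sum>T\<in>Pow S. \<Sum>ws\<in>{ws. ws \<in> {ws. set ws \<subseteq> S \<and> length ws = p} \<and> set ws = T}. c ws)"
      unfolding f_def by (intro sum.cong refl arg_cong[where f="\<lambda>A. sum c A"]) auto
    also have "\<dots> = g S" unfolding g_def
      by (rule sum.group) (use that finite_lists_length_eq[OF that] in auto)
    finally show ?thesis by simp
  qed
  have fin: "finite {0..<p}" by simp
  have "f {0..<p} = (\<Sum>T\<in>Pow {0..<p}. (-1) ^ (card {0..<p} - card T) * g T)"
    by (rule inclusion_exclusion_mobius[OF gf fin])
  moreover have "Sp p v u = f {0..<p}" unfolding Sp_words f_def c_def by (simp add: fsum_def)
  moreover have "fsum (\<lambda>J. fsc ((-1) ^ (p - card J)) (fpow (fsum v J) p)) (Pow {0..<p}) u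
       = (\<Sum>T\<in>Pow {0..<p}. (-1) ^ (card {0..<p} - card T) * g T)"
  proof -
    have "fsc ((- 1) ^ (p - card T)) (fpow (fsum v T) p) u = (- 1) ^ (card {0..<p} - card T) * g T"
      if "T \<in> Pow {0..<p}" for T
    proof -
      have "finite T" using that finite_subset by auto
      then show ?thesis by (simp add: fsc_def fpow_fsum fsum_app g_def c_def)
    qed
    then show ?thesis unfolding fsum_app by (rule sum.cong[OF refl])
  qed
  ultimately show "Sp p v u = fsum (\<lambda>J. fsc ((-1) ^ (p - card J)) (fpow (fsum v J) p)) (Pow {0..<p}) u"
    by simp
qed

definition fs :: "'k::field fa \<Rightarrow> bool" where "fs f \<longleftrightarrow> finite {w. f w \<noteq> 0}"

lemma FA_fs: "f \<in> FA \<Longrightarrow> fs f" by (simp add: FA_def fs_def)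

lemma fmul_fs:
  assumes "fs f" "fs g" shows "fs (fmul f g)"
proof -
  have "{w. fmul f g w \<noteq> 0} \<subseteq> (\<lambda>(a,b). a @ b) ` ({w. f w \<noteq> 0} \<times> {w. g w \<noteq> 0})"
  proof
    fix w assume "w \<in> {w. fmul f g w \<noteq> 0}"
    then obtain i where "f (take i w) * g (drop i w) \<noteq> 0"
      unfolding fmul_def by (auto elim: sum.not_neutral_contains_not_neutral)
    then show "w \<in> (\<lambda>(a,b). a @ b) ` ({w. f w \<noteq> 0} \<times> {w. g w \<noteq> 0})"
      by (auto intro!: image_eqI[where x="(take i w, drop i w)"])
  qed
  then show ?thesis using assms unfolding fs_def by (meson finite_SigmaI finite_imageI finite_subset)
qed

lemma fmul_FA: "f \<in> FA \<Longrightarrow> fs g \<Longrightarrow> fmul f g \<in> FA"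
  using fmul_fs[of f g] FA_fs[of f] by (simp add: FA_def fs_def fmul_def)

lemma fone_fs: "fs fone"
proof -
  have "{w. fone w \<noteq> (0::'a::field)} = {[]}" by (auto simp: fone_def)
  then show ?thesis by (simp add: fs_def)
qed

lemma fpow_fs: "fs v \<Longrightarrow> fs (fpow v n)"
  by (induction n) (auto simp: fpow_0 fpow_Suc fone_fs fmul_fs)

lemma fpow_FA: "v \<in> FA \<Longrightarrow> n > 0 \<Longrightarrow> fpow v n \<in> FA"
  by (cases n) (simp_all add: fpow_Suc fmul_FA fpow_fs FA_fs)

lemma var_FA: "var i \<in> FA"
proof -
  have "{w. var i w \<noteq> (0::'a::field)} = {[i]}" by (auto simp: var_def)
  then show ?thesis by (simp add: FA_def var_def)
qed

lemma fadd_FA: "f \<in> FA \<Longrightarrow> g \<in> FA \<Longrightarrow> fadd f g \<in> FA"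
proof -
  assume a: "f \<in> FA" "g \<in> FA"
  have "{w. fadd f g w \<noteq> 0} \<subseteq> {w. f w \<noteq> 0} \<union> {w. g w \<noteq> 0}" by (auto simp: fadd_def)
  with a show ?thesis by (auto simp: FA_def fadd_def intro: finite_subset)
qed

lemma fsc_FA: "f \<in> FA \<Longrightarrow> fsc c f \<in> FA"
proof -
  assume a: "f \<in> FA"
  have "{w. fsc c f w \<noteq> 0} \<subseteq> {w. f w \<noteq> 0}" by (auto simp: fsc_def)
  with a show ?thesis by (auto simp: FA_def fsc_def intro: finite_subset)
qed

lemma fzero_FA: "fzero \<in> FA" by (simp add: FA_def fzero_def)

lemma fsum_empty: "fsum F {} = fzero" by (simp add: fsum_def fzero_def)
lemma fsum_insert: "finite I \<Longrightarrow> i \<notin> I \<Longrightarrow> fsum F (insert i I) = fadd (F i) (fsum F I)"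
  by (simp add: fsum_def fadd_def)

lemma tspace_fsum:
  assumes T: "tspace T" and "finite I" shows "(\<forall>i\<in>I. F i \<in> T) \<Longrightarrow> fsum F I \<in> T"
  using \<open>finite I\<close>
proof (induction I rule: finite_induct)
  case empty then show ?case using T by (simp add: fsum_empty tspace_def)
next
  case (insert i I) then show ?case using T by (simp add: fsum_insert tspace_def)
qed

lemma FA_tspace: "tspace (FA :: 'k::field fa set)"
  by (auto simp: tspace_def fzero_FA fadd_FA fsc_FA alg_endo_def)

lemma fsum_FA: "finite I \<Longrightarrow> (\<forall>i\<in>I. F i \<in> FA) \<Longrightarrow> fsum F I \<in> FA"
  by (rule tspace_fsum[OF FA_tspace])

lemma tgen_least: "tspace T \<Longrightarrow> S \<subseteq> T \<Longrightarrow> tgen S \<subseteq> T"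
  by (auto simp: tgen_def)

lemma tgen_sub: "S \<subseteq> tgen S"
  by (auto simp: tgen_def)

lemma tgen_tspace:
  assumes "S \<subseteq> FA" shows "tspace (tgen S)"
proof -
  have ne: "FA \<in> {T. tspace T \<and> S \<subseteq> T}" using assms FA_tspace by auto
  show ?thesis unfolding tgen_def
  proof (subst tspace_def, intro conjI allI impI ballI)
    show "\<Inter>{T. tspace T \<and> S \<subseteq> T} \<subseteq> FA" using ne by auto
  qed (auto simp: tspace_def)
qed

definition Wd :: "(nat \<Rightarrow> nat \<Rightarrow> bool) \<Rightarrow> nat list \<Rightarrow> nat list set" where
  "Wd R u = {w. length w = length u \<and> (\<forall>k<length u. R (w!k) (u!k))}"

definition subst :: "(nat \<Rightarrow> nat \<Rightarrow> bool) \<Rightarrow> 'k::field fa \<Rightarrow> 'k fa" where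
  "subst R f = (\<lambda>u. \<Sum>w\<in>Wd R u. f w)"

lemma Wd_finite:
  assumes fin1: "\<And>c. finite {i. R i c}" shows "finite (Wd R u)"
proof -
  have "Wd R u \<subseteq> {w. set w \<subseteq> (\<Union>c\<in>set u. {i. R i c}) \<and> length w = length u}"
  proof
    fix w assume w: "w \<in> Wd R u"
    have "x \<in> (\<Union>c\<in>set u. {i. R i c})" if "x \<in> set w" for x
    proof -
      obtain k where k: "k < length w" "w ! k = x" using \<open>x \<in> set w\<close> by (auto simp: in_set_conv_nth)
      then show ?thesis using w by (auto simp: Wd_def intro!: bexI[where x="u!k"])
    qed
    then show "w \<in> {w. set w \<subseteq> (\<Union>c\<in>set u. {i. R i c}) \<and> length w = length u}"
      using w by (auto simp: Wd_def)
  qed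
  moreover have "finite (\<Union>c\<in>set u. {i. R i c})" using fin1 by auto
  ultimately show ?thesis using finite_lists_length_eq finite_subset by blast
qed

lemma Wd_Nil: "Wd R [] = {[]}" by (auto simp: Wd_def)

lemma subst_mul_aux:
  assumes mm: "m \<le> length u"
  shows "(\<Sum>w\<in>Wd R u. f (take m w) * g (drop m w))
       = (\<Sum>ab\<in>Wd R (take m u) \<times> Wd R (drop m u). f (fst ab) * (g (snd ab) :: 'k::field))"
proof (rule sum.reindex_bij_witness[where j = "\<lambda>w. (take m w, drop m w)" and i = "\<lambda>ab. fst ab @ snd ab"])
  fix w assume w: "w \<in> Wd R u"
  show "fst (take m w, drop m w) @ snd (take m w, drop m w) = w" by simp
  show "(take m w, drop m w) \<in> Wd R (take m u) \<times> Wd R (drop m u)"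
    using w mm by (auto simp: Wd_def)
  show "f (fst (take m w, drop m w)) * g (snd (take m w, drop m w)) = f (take m w) * g (drop m w)" by simp
next
  fix ab assume ab: "ab \<in> Wd R (take m u) \<times> Wd R (drop m u)"
  obtain a b where abd: "ab = (a,b)" by (cases ab)
  have la: "length a = m" using ab abd mm by (auto simp: Wd_def)
  show "(take m (fst ab @ snd ab), drop m (fst ab @ snd ab)) = ab" using abd la by simp
  have "\<forall>k<length u. R ((a @ b) ! k) (u ! k)"
  proof (intro allI impI)
    fix k assume k: "k < length u"
    show "R ((a @ b) ! k) (u ! k)"
    proof (cases "k < m")
      case True then show ?thesis using ab abd la mm by (auto simp: Wd_def nth_append)
    next
      case False
      then obtain q where q: "k = m + q" by (metis le_Suc_ex not_less)
      then show ?thesis using ab abd la mm k by (auto simp: Wd_def nth_append)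
    qed
  qed
  then show "fst ab @ snd ab \<in> Wd R u" using ab abd la mm by (auto simp: Wd_def)
qed

lemma subst_mul:
  assumes fin1: "\<And>c. finite {i. R i c}"
  shows "subst R (fmul f g) = fmul (subst R f) (subst R g)"
proof (rule ext)
  fix u
  have "subst R (fmul f g) u = (\<Sum>w\<in>Wd R u. \<Sum>i\<le>length u. f (take i w) * g (drop i w))"
    unfolding subst_def fmul_def by (intro sum.cong refl) (simp add: Wd_def)
  also have "\<dots> = (\<Sum>i\<le>length u. \<Sum>w\<in>Wd R u. f (take i w) * g (drop i w))" by (rule sum.swap)
  also have "\<dots> = (\<Sum>i\<le>length u. \<Sum>ab\<in>Wd R (take i u) \<times> Wd R (drop i u). f (fst ab) * g (snd ab))"
    by (intro sum.cong refl subst_mul_aux) simp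
  also have "\<dots> = fmul (subst R f) (subst R g) u"
    unfolding fmul_def subst_def
    by (intro sum.cong refl) (simp add: sum_product sum.cartesian_product Wd_finite[OF fin1] split_def)
  finally show "subst R (fmul f g) u = fmul (subst R f) (subst R g) u" .
qed

lemma subst_fone: "subst R fone = fone"
proof (rule ext)
  fix u :: "nat list"
  show "subst R fone u = fone u"
  proof (cases "u = []")
    case True then show ?thesis by (simp add: subst_def Wd_Nil fone_def)
  next
    case False
    have "\<forall>w\<in>Wd R u. w \<noteq> []" using False by (auto simp: Wd_def)
    then show ?thesis using False by (simp add: subst_def fone_def)
  qed
qed

lemma subst_fpow:
  assumes fin1: "\<And>c. finite {i. R i c}"
  shows "subst R (fpow v n) = fpow (subst R v) n"
  by (induction n) (simp_all add: fpow_0 fpow_Suc subst_fone subst_mul[OF fin1])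

lemma subst_FA:
  assumes fin1: "\<And>c. finite {i. R i c}" and fin2: "\<And>i. finite {c. R i c}"
    and f: "f \<in> FA"
  shows "subst R f \<in> FA"
proof -
  define V where "V w = {u. set u \<subseteq> (\<Union>i\<in>set w. {c. R i c}) \<and> length u = length w}" for w :: "nat list"
  have fV: "finite (V w)" for w
    unfolding V_def by (rule finite_lists_length_eq) (use fin2 in auto)
  have "{u. subst R f u \<noteq> 0} \<subseteq> (\<Union>w\<in>{w. f w \<noteq> 0}. V w)"
  proof
    fix u assume "u \<in> {u. subst R f u \<noteq> 0}"
    then obtain w where w: "w \<in> Wd R u" "f w \<noteq> 0"
      unfolding subst_def by (auto elim: sum.not_neutral_contains_not_neutral)
    have "u \<in> V w"
      unfolding V_def
    proof (intro CollectI conjI subsetI)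
      fix c assume "c \<in> set u"
      then obtain k where k: "k < length u" "u ! k = c" by (auto simp: in_set_conv_nth)
      then show "c \<in> (\<Union>i\<in>set w. {c. R i c})" using w
        by (auto simp: Wd_def intro!: bexI[where x="w!k"])
    qed (use w in \<open>auto simp: Wd_def\<close>)
    then show "u \<in> (\<Union>w\<in>{w. f w \<noteq> 0}. V w)" using w by auto
  qed
  moreover have "finite (\<Union>w\<in>{w. f w \<noteq> 0}. V w)" using f fV by (auto simp: FA_def)
  ultimately have "finite {u. subst R f u \<noteq> 0}" by (rule finite_subset)
  moreover have "subst R f [] = 0" using f by (simp add: subst_def Wd_Nil FA_def)
  ultimately show ?thesis by (simp add: FA_def)
qed

lemma subst_endo:
  assumes fin1: "\<And>c. finite {i. R i c}" and fin2: "\<And>i. finite {c. R i c}"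
  shows "alg_endo (subst R :: 'k::field fa \<Rightarrow> 'k fa)"
  unfolding alg_endo_def
  by (auto simp: subst_FA[OF fin1 fin2] subst_mul[OF fin1])
     (auto simp: subst_def fadd_def fsc_def sum.distrib sum_distrib_left fun_eq_iff)

lemma subst_var:
  assumes fin1: "\<And>c. finite {i. R i c}"
  shows "subst R (var i) u = (if length u = 1 \<and> R i (u!0) then 1 else 0)"
proof -
  have "subst R (var i) u = (\<Sum>w\<in>Wd R u. if w = [i] then 1 else 0)" by (simp add: subst_def var_def)
  also have "\<dots> = (if [i] \<in> Wd R u then 1 else 0)"
    by (simp add: Wd_finite[OF fin1] sum.delta')
  also have "([i] \<in> Wd R u) = (length u = 1 \<and> R i (u!0))" by (auto simp: Wd_def) (metis nth_Cons_0 zero_less_Suc)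
  finally show ?thesis by simp
qed

definition RJ :: "nat set \<Rightarrow> nat \<Rightarrow> nat \<Rightarrow> bool" where
  "RJ J i c \<longleftrightarrow> (i \<noteq> 1 \<and> c = i) \<or> (i = 1 \<and> c \<noteq> 0 \<and> c - 1 \<in> J)"

lemma RJ_fin1: "finite {i. RJ J i c}"
  by (rule finite_subset[of _ "{c, 1}"]) (auto simp: RJ_def)

lemma RJ_fin2: "finite J \<Longrightarrow> finite {c. RJ J i c}"
  by (rule finite_subset[of _ "{i} \<union> Suc ` J"]) (auto simp: RJ_def image_iff, metis Suc_pred)

lemma subst_RJ_var:
  assumes "finite J"
  shows "subst (RJ J) (var 1) = (fsum (\<lambda>j. var (Suc j)) J :: 'k::field fa)"
proof (rule ext)
  fix u :: "nat list"
  show "subst (RJ J) (var 1) u = (fsum (\<lambda>j. var (Suc j)) J :: 'k fa) u"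
  proof (cases "\<exists>j\<in>J. u = [Suc j]")
    case True
    then obtain j where j: "j \<in> J" "u = [Suc j]" by auto
    have "fsum (\<lambda>j. var (Suc j)) J u = (\<Sum>j'\<in>J. if j' = j then (1::'k) else 0)"
      unfolding fsum_app using j by (intro sum.cong refl) (auto simp: var_def)
    also have "\<dots> = 1" using j assms by (simp add: sum.delta')
    finally show ?thesis using j by (simp add: subst_var[OF RJ_fin1] RJ_def)
  next
    case False
    have "fsum (\<lambda>j. var (Suc j)) J u = (0::'k)"
      unfolding fsum_app using False by (intro sum.neutral) (auto simp: var_def)
    moreover have "\<not> (length u = 1 \<and> RJ J 1 (u!0))"
    proof
      assume a: "length u = 1 \<and> RJ J 1 (u!0)"
      then obtain c where "u = [c]" by (cases u) auto
      with a False show False by (cases c) (auto simp: RJ_def)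
    qed
    ultimately show ?thesis by (simp add: subst_var[OF RJ_fin1])
  qed
qed

lemma Sp_in:
  assumes T: "tspace T" and x: "fpow (var 1) p \<in> (T :: 'k::field fa set)"
  shows "Sp p (\<lambda>i. var (Suc i)) \<in> T"
proof -
  have "fpow (fsum (\<lambda>i. var (Suc i)) J) p \<in> T" if J: "J \<in> Pow {0..<p}" for J
  proof -
    have fJ: "finite J" using J finite_subset by auto
    have "alg_endo (subst (RJ J) :: 'k fa \<Rightarrow> 'k fa)" by (rule subst_endo[OF RJ_fin1 RJ_fin2[OF fJ]])
    then have "subst (RJ J) (fpow (var 1) p) \<in> T" using T x by (auto simp: tspace_def)
    then show ?thesis unfolding subst_fpow[OF RJ_fin1] subst_RJ_var[OF fJ] .
  qed
  then show ?thesis unfolding Sp_polar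
    using T by (intro tspace_fsum[OF T]) (auto simp: tspace_def)
qed

lemma L_tspace:
  assumes "p > 0" shows "tspace (Lsp p (Suc n) :: 'k::field fa set)"
proof (induction n)
  case 0 show ?case using fpow_FA[OF var_FA assms] by (simp only: Lsp.simps) (rule tgen_tspace, simp)
next
  case (Suc n)
  have "Lsp p (Suc n) \<subseteq> (FA :: 'k fa set)" using Suc by (simp add: tspace_def)
  moreover have "fmul u (fpow v p) \<in> (FA :: 'k fa set)" if "u \<in> Lsp p (Suc n)" "v \<in> FA" for u v
    using that \<open>Lsp p (Suc n) \<subseteq> FA\<close> by (meson subsetD fmul_FA fpow_fs FA_fs)
  ultimately show ?case by (simp only: Lsp.simps) (rule tgen_tspace, auto)
qed

lemma R_sub_L:
  assumes "p > 0" shows "(Rsp p (Suc n) :: 'k::field fa set) \<subseteq> Lsp p (Suc n)"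
proof (induction n)
  case 0
  have "Sp p (\<lambda>i. var (Suc i)) \<in> (Lsp p (Suc 0) :: 'k fa set)"
    by (simp add: tgen_def Sp_in)
  then show ?case using L_tspace[OF assms, of 0] unfolding Rsp.simps(2) by (intro tgen_least) auto
next
  case (Suc n)
  let ?L = "Lsp p (Suc (Suc n)) :: 'k fa set"
  have TL: "tspace ?L" by (rule L_tspace[OF assms])
  have LL: "Lsp p (Suc n) \<subseteq> ?L" by (simp only: Lsp.simps(3)) (meson le_sup_iff tgen_sub)
  have XL: "fmul u (fpow v p) \<in> ?L" if "u \<in> Lsp p (Suc n)" "v \<in> FA" for u v
    using that by (simp only: Lsp.simps(3)) (rule subsetD[OF tgen_sub], blast)
  have XR: "fmul u (Sp p v) \<in> ?L" if u: "u \<in> Rsp p (Suc n)" and v: "\<forall>i<p. v i \<in> FA" for u v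
  proof -
    have uL: "u \<in> Lsp p (Suc n)" using u Suc by auto
    have "fmul u (fpow (fsum v J) p) \<in> ?L" if J: "J \<in> Pow {0..<p}" for J
    proof -
      have "fsum v J \<in> FA" using J v by (intro fsum_FA) (auto intro: finite_subset)
      then show ?thesis using XL uL by blast
    qed
    then show ?thesis unfolding Sp_polar fmul_fsum_right fmul_fsc_right
      using TL by (intro tspace_fsum[OF TL]) (auto simp: tspace_def)
  qed
  have "Rsp p (Suc n) \<subseteq> ?L" using Suc LL by blast
  then show ?case using XR by (simp only: Rsp.simps(3)) (rule tgen_least[OF TL], blast)
qed

theorem corollary3p1:
  fixes p n :: nat
  assumes "infinite (UNIV :: 'k::field set)"
    and "CHAR('k) = p" and "p > 0"
    and "n \<ge> 1"
  shows "(Rsp p n :: 'k fa set) \<subseteq> Lsp p n"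
proof -
  obtain m where "n = Suc m" using assms(4) by (cases n) auto
  then show ?thesis using R_sub_L[OF assms(3)] by simp
qed

end
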